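(* Let $m\in\mathbb{N}$ be even and let $q(x)\in\mathbb{R}[x]$ have odd degree with $q(x)\ge0$ on $[0,1]$. Let $K=\{(x,y)\in\mathbb{R}^2: 0\le x\le1,\ y^m\ge q(x),\ y\ge0\}$. Then there is no finite set $S\subseteq\mathbb{R}[x,y]$ with $K_S=K$ such that the preordering $T_S$ is saturated.
   Context: For a finite set $S=\{g_1,\dots,g_s\}\subseteq\mathbb{R}[x,y]$, $K_S=\{p\in\mathbb{R}^2: g_i(p)\ge0\ \forall i\}$, and the preordering $T_S$ is the set of all $\sum_{e\in\{0,1\}^s}\sigma_e g_1^{e_1}\cdots g_s^{e_s}$ with each $\sigma_e$ a sum of squares in $\mathbb{R}[x,y]$. $T_S$ is saturated if it contains every $f\in\mathbb{R}[x,y]$ that is non-negative on $K_S$. *)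

theory Defs
  imports "HOL-Computational_Algebra.Polynomial"
begin

text \<open>Bivariate real polynomials R[x,y] are represented as R[x][y], i.e. polynomials
  in y whose coefficients are polynomials in x.\<close>
type_synonym bpoly = "real poly poly"

definition eval2 :: "bpoly \<Rightarrow> real \<Rightarrow> real \<Rightarrow> real" where
  "eval2 p a b = poly (map_poly (\<lambda>c. poly c a) p) b"

definition sos :: "bpoly \<Rightarrow> bool" where
  "sos f \<longleftrightarrow> (\<exists>gs. f = sum_list (map (\<lambda>g. g ^ 2) gs))"

definition KS :: "bpoly set \<Rightarrow> (real \<times> real) set" where
  "KS S = {(a, b). \<forall>g\<in>S. eval2 g a b \<ge> 0}"

definition preordering :: "bpoly set \<Rightarrow> bpoly set" where
  "preordering S = {f. \<exists>\<sigma>. (\<forall>E\<subseteq>S. sos (\<sigma> E)) \<and> f = (\<Sum>E\<in>Pow S. \<sigma> E * \<Prod>E)}"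

definition saturated :: "bpoly set \<Rightarrow> bool" where
  "saturated S \<longleftrightarrow>
     (\<forall>f. (\<forall>(a, b)\<in>KS S. eval2 f a b \<ge> 0) \<longrightarrow> f \<in> preordering S)"

end

theory Submission imports Defs begin

lemma eval2_alt: "eval2 p a b = poly (poly p [:b:]) a"
proof (induct p)
  case 0 then show ?case by (simp add: eval2_def)
next
  case (pCons c p)
  have "eval2 (pCons c p) a b = poly c a + b * eval2 p a b"
    by (simp add: eval2_def map_poly_pCons)
  also have "\<dots> = poly (poly (pCons c p) [:b:]) a"
    using pCons by simp
  finally show ?case .
qed

lemma eval2_mult: "eval2 (p * q) a b = eval2 p a b * eval2 q a b"
  by (simp add: eval2_alt)
lemma eval2_sum: "eval2 (\<Sum>i\<in>A. f i) a b = (\<Sum>i\<in>A. eval2 (f i) a b)"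
  by (simp add: eval2_alt poly_sum)
lemma eval2_prod: "eval2 (\<Prod>i\<in>A. f i) a b = (\<Prod>i\<in>A. eval2 (f i) a b)"
  by (simp add: eval2_alt poly_prod)
lemma eval2_sos: "sos f \<Longrightarrow> eval2 f a b \<ge> 0"
proof -
  have "\<And>gs. eval2 (sum_list (map (\<lambda>g. g ^ 2) gs)) a b \<ge> 0"
  proof -
    fix gs :: "bpoly list"
    show "eval2 (sum_list (map (\<lambda>g. g ^ 2) gs)) a b \<ge> 0"
      by (induct gs) (auto simp: eval2_alt)
  qed
  then show "sos f \<Longrightarrow> eval2 f a b \<ge> 0" unfolding sos_def by auto
qed

lemma deg_le1:
  fixes p :: "real poly"
  assumes "\<And>y. y \<ge> y0 \<Longrightarrow> \<bar>poly p y\<bar> \<le> y + \<bar>y0\<bar>"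
  shows "degree p \<le> 1"
proof (rule ccontr)
  assume d: "\<not> degree p \<le> 1"
  obtain c0 p1 where p: "p = pCons c0 p1" by (cases p) auto
  obtain c1 r where p1: "p1 = pCons c1 r" by (cases p1) auto
  have r0: "r \<noteq> 0" using d p p1 by (auto split: if_splits)
  define l where "l = lead_coeff r"
  have l0: "l \<noteq> 0" using r0 l_def by auto
  define r' where "r' = smult (sgn l) r"
  have "lead_coeff r' = \<bar>l\<bar>" using l_def r'_def by (simp add: abs_sgn)
  hence "lead_coeff r' > 0" using l0 by simp
  from poly_pinfty_gt_lc[OF this] obtain n where n: "\<And>x. x \<ge> n \<Longrightarrow> poly r' x \<ge> \<bar>l\<bar>"
    using \<open>lead_coeff r' = \<bar>l\<bar>\<close> by auto
  have rr: "\<bar>poly r x\<bar> \<ge> \<bar>l\<bar>" if "x \<ge> n" for x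
  proof -
    have "poly r' x = sgn l * poly r x" by (simp add: r'_def)
    also have "\<dots> \<le> \<bar>poly r x\<bar>" using l0 by (cases "l > 0") auto
    finally show ?thesis using n[OF that] by linarith
  qed
  define y where "y = max (max n y0) (max 1 ((\<bar>c0\<bar>+\<bar>c1\<bar>+2+\<bar>y0\<bar>)/\<bar>l\<bar>))"
  have y1: "y \<ge> 1" "y \<ge> n" "y \<ge> y0" unfolding y_def by (auto simp: le_max_iff_disj)
  have "y \<ge> (\<bar>c0\<bar>+\<bar>c1\<bar>+2+\<bar>y0\<bar>)/\<bar>l\<bar>" unfolding y_def by (simp add: le_max_iff_disj)
  hence yl: "\<bar>l\<bar> * y \<ge> \<bar>c0\<bar>+\<bar>c1\<bar>+2+\<bar>y0\<bar>"
    using l0 by (simp add: field_simps)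
  have pv: "poly p y = c0 + y * c1 + y^2 * poly r y" by (simp add: p p1 power2_eq_square algebra_simps)
  have "y^2 * \<bar>poly r y\<bar> \<ge> y^2 * \<bar>l\<bar>" using rr[OF y1(2)] by (simp add: mult_left_mono)
  moreover have "y^2 * \<bar>l\<bar> \<ge> y * (\<bar>c0\<bar>+\<bar>c1\<bar>+2+\<bar>y0\<bar>)"
    using yl y1 by (simp add: power2_eq_square mult_left_mono mult.assoc mult.commute)
  moreover have "y * (\<bar>c0\<bar>+\<bar>c1\<bar>+2+\<bar>y0\<bar>) \<ge> \<bar>c0\<bar> + y*\<bar>c1\<bar> + 2*y + \<bar>y0\<bar>"
    using mult_right_mono[of 1 y "\<bar>c0\<bar>"] mult_right_mono[of 1 y "\<bar>y0\<bar>"] y1 by (simp add: algebra_simps)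
  moreover have "\<bar>poly p y\<bar> \<ge> y^2 * \<bar>poly r y\<bar> - \<bar>c0\<bar> - y*\<bar>c1\<bar>"
  proof -
    have "y^2 * \<bar>poly r y\<bar> = \<bar>poly p y - c0 - y * c1\<bar>" using pv by (simp add: abs_mult)
    also have "\<dots> \<le> \<bar>poly p y\<bar> + \<bar>c0\<bar> + \<bar>y * c1\<bar>" by linarith
    also have "\<bar>y * c1\<bar> = y * \<bar>c1\<bar>" using y1 by (simp add: abs_mult)
    finally show ?thesis by linarith
  qed
  ultimately have "\<bar>poly p y\<bar> > y + \<bar>y0\<bar>" using y1 by linarith
  with assms[OF y1(3)] show False by linarith
qed

lemma deg_le1_poly:
  fixes p :: "real poly"
  assumes "degree p \<le> 1"
  shows "poly p y = coeff p 0 + coeff p 1 * y"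
proof -
  have "poly p y = (\<Sum>i\<le>1. coeff p i * y ^ i)"
    unfolding poly_altdef
    by (rule sum.mono_neutral_left) (use assms le_degree in auto)
  then show ?thesis by simp
qed

lemma nonneg_deg0:
  fixes p :: "real poly"
  assumes "degree p \<le> 1" "\<And>y. poly p y \<ge> 0"
  shows "degree p = 0"
proof (rule ccontr)
  assume "degree p \<noteq> 0"
  hence d: "degree p = 1" using assms(1) by auto
  hence "p \<noteq> 0" by auto
  hence "coeff p (degree p) \<noteq> 0" by simp
  hence c1: "coeff p 1 \<noteq> 0" using d by simp
  define y where "y = -(coeff p 0 + 1) / coeff p 1"
  have "poly p y = -1" using deg_le1_poly[OF assms(1), of y] c1 by (simp add: y_def field_simps)
  with assms(2)[of y] show False by simp
qed

theorem proposition3: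
  fixes m :: nat and q :: "real poly"
  assumes "even m" and "m > 0"
    and "odd (degree q)"
    and "\<forall>x\<in>{0..1}. poly q x \<ge> 0"
  shows "\<not> (\<exists>S. finite S \<and>
              KS S = {(x, y). 0 \<le> x \<and> x \<le> 1 \<and> y ^ m \<ge> poly q x \<and> y \<ge> 0} \<and>
              saturated S)"
proof
  assume "\<exists>S. finite S \<and>
              KS S = {(x, y). 0 \<le> x \<and> x \<le> 1 \<and> y ^ m \<ge> poly q x \<and> y \<ge> 0} \<and>
              saturated S"
  then obtain S where fin: "finite S"
    and KSeq: "KS S = {(x, y). 0 \<le> x \<and> x \<le> 1 \<and> y ^ m \<ge> poly q x \<and> y \<ge> 0}"
    and sat: "saturated S" by blast
  define b where "b x = root m (poly q x)" for x
  define A where "A E = coeff (\<Prod>E) 1" for E :: "bpoly set"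
  define B where "B E = coeff (\<Prod>E) 0" for E :: "bpoly set"
  define P where "P E = q * A E ^ m - B E ^ m" for E
  define Z where "Z = (\<Union>E\<in>{E\<in>Pow S. P E \<noteq> 0}. {x. poly (P E) x = 0})"
  have finZ: "finite Z" unfolding Z_def using fin poly_roots_finite by auto
  define Z' where "Z' = insert 1 (Z \<inter> {0<..})"
  have finZ': "finite Z'" "Z' \<noteq> {}" using finZ by (auto simp: Z'_def)
  define z0 where "z0 = Min Z'"
  have z0pos: "z0 > 0" using finZ' unfolding z0_def by (subst Min_gr_iff) (auto simp: Z'_def)
  have z01: "z0 \<le> 1" using finZ' unfolding z0_def by (intro Min_le) (auto simp: Z'_def)
  have noZ: "z \<ge> z0" if "z \<in> Z" "z > 0" for z
    using finZ' that unfolding z0_def by (intro Min_le) (auto simp: Z'_def)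
  define \<theta> where "\<theta> = z0 / 2"
  have th: "\<theta> > 0" "\<theta> \<le> 1" using z0pos z01 by (auto simp: \<theta>_def)
  have bnn: "b x \<ge> 0" if "x \<in> {0..1}" for x
    using assms(4) that by (simp add: b_def real_root_ge_zero)
  define Kc where "Kc = 4 * (b \<theta> + 1) / \<theta>^2"
  define F where "F x = b x + Kc * (x - \<theta>)^2" for x
  have "continuous_on {0..1} F" unfolding F_def b_def by (intro continuous_intros)
  then obtain a where a01: "a \<in> {0..1}" and amin: "\<And>x. x \<in> {0..1} \<Longrightarrow> F a \<le> F x"
    using continuous_attains_inf[of "{0..1::real}" F] by auto
  have "F a \<le> F \<theta>" using amin th by auto
  hence "Kc * (a - \<theta>)^2 \<le> b \<theta>" using bnn[OF a01] by (simp add: F_def)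
  hence "Kc * (a - \<theta>)^2 < b \<theta> + 1" by linarith
  hence "4 * (b \<theta> + 1) * (a - \<theta>)^2 < (b \<theta> + 1) * \<theta>^2"
    using th by (simp add: Kc_def field_simps)
  moreover have "b \<theta> + 1 > 0" using bnn[of \<theta>] th by auto
  ultimately have "4 * (a - \<theta>)^2 < \<theta>^2"
    by (metis mult.assoc mult.commute mult_less_cancel_left_pos)
  hence "(2 * \<bar>a - \<theta>\<bar>)^2 < \<theta>^2" by (simp add: power_mult_distrib)
  hence "2 * \<bar>a - \<theta>\<bar> < \<theta>" using th by (meson abs_ge_zero power_less_imp_less_base less_imp_le)
  hence apos: "a > 0" and az0: "a < z0" by (auto simp: \<theta>_def abs_if split: if_split_asm)
  have aZ: "a \<notin> Z" using noZ apos az0 by force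
  define y0 where "y0 = b a"
  have y0nn: "y0 \<ge> 0" using bnn[OF a01] by (simp add: y0_def)
  have y0m: "y0 ^ m = poly q a" using assms(2,4) a01 by (simp add: y0_def b_def)
  define h :: "real poly" where "h = [:F a:] - smult Kc ([:-\<theta>, 1:]^2)"
  have hval: "poly h x = F a - Kc * (x - \<theta>)^2" for x
    by (simp add: h_def power2_eq_square algebra_simps)
  define f :: bpoly where "f = [: -h, 1 :]"
  have fval: "eval2 f x y = y - poly h x" for x y
    by (simp add: f_def eval2_alt)
  have "\<forall>(x, y)\<in>KS S. eval2 f x y \<ge> 0"
  proof (clarify)
    fix x y assume "(x, y) \<in> KS S"
    hence xy: "0 \<le> x" "x \<le> 1" "y ^ m \<ge> poly q x" "y \<ge> 0" by (auto simp: KSeq)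
    have "b x \<le> root m (y ^ m)" unfolding b_def using xy assms(2) by simp
    also have "\<dots> = y" using xy assms(2) by (simp add: real_root_power_cancel)
    finally have "b x \<le> y" .
    moreover have "F a \<le> F x" using amin xy by auto
    ultimately show "eval2 f x y \<ge> 0" by (simp add: fval hval F_def)
  qed
  hence "f \<in> preordering S" using sat unfolding saturated_def by blast
  then obtain \<sigma> where sos\<sigma>: "\<And>E. E \<subseteq> S \<Longrightarrow> sos (\<sigma> E)"
    and feq: "f = (\<Sum>E\<in>Pow S. \<sigma> E * \<Prod>E)"
    unfolding preordering_def by blast
  define T where "T E y = eval2 (\<sigma> E) a y * eval2 (\<Prod>E) a y" for E y
  have finP: "finite (Pow S)" using fin by simp
  have hay0: "poly h a = y0" by (simp add: hval F_def y0_def)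
  have sumT: "(\<Sum>E\<in>Pow S. T E y) = y - y0" for y
  proof -
    have "eval2 f a y = (\<Sum>E\<in>Pow S. T E y)"
      by (subst feq) (simp add: eval2_sum eval2_mult T_def)
    thus ?thesis by (simp add: fval hay0)
  qed
  have Tnn: "T E y \<ge> 0" if "E \<in> Pow S" "y \<ge> y0" for E y
  proof -
    have "y0 ^ m \<le> y ^ m" using that y0nn by (simp add: power_mono)
    hence "(a, y) \<in> KS S" using a01 y0m y0nn that by (auto simp: KSeq)
    hence gE: "\<forall>g\<in>S. eval2 g a y \<ge> 0" by (auto simp: KS_def)
    have "eval2 (\<Prod>E) a y = (\<Prod>g\<in>E. eval2 g a y)"
      using eval2_prod[of "\<lambda>g. g" E a y] by simp
    also have "\<dots> \<ge> 0" using gE that by (intro prod_nonneg) auto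
    finally have "eval2 (\<Prod>E) a y \<ge> 0" .
    moreover have "eval2 (\<sigma> E) a y \<ge> 0" using sos\<sigma> that eval2_sos by auto
    ultimately show ?thesis by (simp add: T_def)
  qed
  have T0: "T E y0 = 0" if "E \<in> Pow S" for E
  proof -
    have "(\<Sum>E\<in>Pow S. T E y0) = 0" using sumT by simp
    thus ?thesis using sum_nonneg_eq_0_iff[OF finP, of "\<lambda>E. T E y0"] Tnn that by auto
  qed
  obtain E where EP: "E \<in> Pow S" and T1: "T E (y0 + 1) \<noteq> 0"
  proof (rule ccontr)
    assume "\<not> thesis"
    hence "\<forall>E\<in>Pow S. T E (y0 + 1) = 0" using that by blast
    hence "(\<Sum>E\<in>Pow S. T E (y0 + 1)) = 0" by simp
    with sumT[of "y0 + 1"] show False by simp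
  qed
  define \<phi> where "\<phi> p = map_poly (\<lambda>c. poly c a) p" for p :: bpoly
  have phi: "poly (\<phi> p) y = eval2 p a y" for p y by (simp add: eval2_def \<phi>_def)
  define Sp where "Sp = \<phi> (\<sigma> E)"
  define Gp where "Gp = \<phi> (\<Prod>E)"
  have Tp: "poly (Sp * Gp) y = T E y" for y by (simp add: Sp_def Gp_def phi T_def)
  have "degree (Sp * Gp) \<le> 1"
  proof (rule deg_le1[of y0])
    fix y assume y: "y \<ge> y0"
    have "T E y \<le> (\<Sum>E\<in>Pow S. T E y)"
      using EP finP Tnn y by (intro member_le_sum) auto
    thus "\<bar>poly (Sp * Gp) y\<bar> \<le> y + \<bar>y0\<bar>" using Tp Tnn[OF EP y] sumT[of y] by simp
  qed
  have Sp0: "Sp \<noteq> 0" and Gp0: "Gp \<noteq> 0" using T1 Tp[of "y0+1"] by auto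
  hence degsum: "degree Sp + degree Gp \<le> 1" using \<open>degree (Sp * Gp) \<le> 1\<close> by (simp add: degree_mult_eq)
  have "degree Sp = 0"
    by (rule nonneg_deg0) (use degsum sos\<sigma> EP eval2_sos in \<open>auto simp: Sp_def phi\<close>)
  then obtain s where s: "Sp = [:s:]" using degree0_coeffs by blast
  have s0: "s \<noteq> 0" using Sp0 s by auto
  have Gdeg: "degree Gp \<le> 1" using degsum by simp
  have G0: "poly Gp y0 = 0" using T0[OF EP] Tp[of y0] s s0 by simp
  have G1: "poly Gp (y0 + 1) \<noteq> 0" using T1 Tp[of "y0+1"] s by auto
  have coefG: "coeff Gp n = poly (coeff (\<Prod>E) n) a" for n
    by (simp add: Gp_def \<phi>_def coeff_map_poly)
  define \<alpha> where "\<alpha> = poly (A E) a"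
  define \<beta> where "\<beta> = poly (B E) a"
  have Gy: "poly Gp y = \<beta> + \<alpha> * y" for y
    using deg_le1_poly[OF Gdeg, of y] by (simp add: coefG \<alpha>_def \<beta>_def A_def B_def)
  have eq0: "\<beta> + \<alpha> * y0 = 0" using G0 Gy by simp
  have al0: "\<alpha> \<noteq> 0" using G0 G1 Gy by auto
  have "poly (P E) a = y0 ^ m * \<alpha> ^ m - \<beta> ^ m"
    by (simp add: P_def \<alpha>_def \<beta>_def y0m)
  also have "\<beta> = - (\<alpha> * y0)" using eq0 by simp
  also have "(- (\<alpha> * y0)) ^ m = (\<alpha> * y0) ^ m" using assms(1) by simp
  finally have "poly (P E) a = 0" by (simp add: power_mult_distrib)
  hence PE: "P E = 0" using aZ EP unfolding Z_def by auto
  hence qAB: "q * A E ^ m = B E ^ m" by (simp add: P_def)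
  have A0: "A E \<noteq> 0" using al0 \<alpha>_def by auto
  have q0: "q \<noteq> 0" using assms(3) by auto
  have "q * A E ^ m \<noteq> 0" using A0 q0 by simp
  hence B0: "B E \<noteq> 0" using qAB assms(2) by auto
  have "degree q + m * degree (A E) = m * degree (B E)"
    using qAB q0 A0 B0 by (metis degree_mult_eq degree_power_eq power_eq_0_iff)
  hence "even (degree q)" using assms(1)
    by (metis dvd_add_left_iff dvd_mult2)
  with assms(3) show False by simp
qed

end
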